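(* For $F\in\mathbb F_{\Phi^*}$ define $\varphi(F,x)=\int_0^1\Phi^*(F^\leftarrow(u)+x)\,du-x$ for $x\in\mathbb R$. Then: 1) $\varphi(F,\cdot)$ is convex and its set of minimizers is a nonempty compact interval of $\mathbb R$; 2) the left and right derivatives of $\varphi(F,\cdot)$ satisfy, for every $x\in\mathbb R$, $\varphi(F,\cdot)'_-(x)=\int_0^1\Phi^{*\prime}_-(F^\leftarrow(u)+x)\,du-1$ and $\varphi(F,\cdot)'_+(x)=\int_0^1\Phi^{*\prime}_+(F^\leftarrow(u)+x)\,du-1$.
   Context: $\Phi:[0,\infty[\to[0,\infty]$ lower semicontinuous convex with $\Phi(0)<\infty$, $\Phi(x_0)<\infty$ for some $x_0>1$, $\inf_{x\ge0}\Phi(x)=0$, $\lim_{x\to\infty}\Phi(x)/x=\infty$; $\Phi^*(y)=\sup_{x\ge0}(xy-\Phi(x))$ is finite, convex, nondecreasing; $\Phi^{*\prime}_-,\Phi^{*\prime}_+$ denote its left and right derivatives. On an atomless probability space, $H^{\Phi^*}=\{X:\mathbb E[\Phi^*(c|X|)]<\infty\ \forall c>0\}$, and $\mathbb F_{\Phi^*}$ is the set of distribution functions of random variables in $H^{\Phi^*}$; $F^\leftarrow$ denotes the left-continuous quantile function of $F$. *)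

theory Defs
  imports "HOL-Probability.Probability"
begin

text \<open>Phi is modelled as a function real => ereal; only its values on [0,inf) matter.\<close>

definition Young_fun :: "(real \<Rightarrow> ereal) \<Rightarrow> bool" where
  "Young_fun \<Phi> \<longleftrightarrow>
     (\<forall>x\<ge>0. \<Phi> x \<ge> 0) \<and>
     \<comment> \<open>lower semicontinuous on [0,inf)\<close>
     (\<forall>x\<ge>0. \<forall>t<\<Phi> x. eventually (\<lambda>y. t < \<Phi> y) (at x within {0..})) \<and>
     \<comment> \<open>convex on [0,inf)\<close>
     (\<forall>x\<ge>0. \<forall>y\<ge>0. \<forall>t\<in>{0..1}.
        \<Phi> ((1 - t) * x + t * y) \<le> ereal (1 - t) * \<Phi> x + ereal t * \<Phi> y) \<and>
     \<Phi> 0 < \<infinity> \<and>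
     (\<exists>x0>1. \<Phi> x0 < \<infinity>) \<and>
     (INF x\<in>{0..}. \<Phi> x) = 0 \<and>
     ((\<lambda>x. \<Phi> x / ereal x) \<longlongrightarrow> \<infinity>) at_top"

text \<open>Convex conjugate Phi*(y) = sup_{x>=0} (x y - Phi x) (finite under Young_fun).\<close>
definition young_conj :: "(real \<Rightarrow> ereal) \<Rightarrow> real \<Rightarrow> real" where
  "young_conj \<Phi> y = real_of_ereal (SUP x\<in>{0..}. ereal (x * y) - \<Phi> x)"

definition lderiv :: "(real \<Rightarrow> real) \<Rightarrow> real \<Rightarrow> real" where
  "lderiv f x = Lim (at_left 0) (\<lambda>h. (f (x + h) - f x) / h)"

definition rderiv :: "(real \<Rightarrow> real) \<Rightarrow> real \<Rightarrow> real" where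
  "rderiv f x = Lim (at_right 0) (\<lambda>h. (f (x + h) - f x) / h)"

definition quantile :: "(real \<Rightarrow> real) \<Rightarrow> real \<Rightarrow> real" where
  "quantile F u = Inf {x. u \<le> F x}"

definition atomless :: "'a measure \<Rightarrow> bool" where
  "atomless M \<longleftrightarrow> (\<forall>A\<in>sets M. 0 < emeasure M A \<longrightarrow>
      (\<exists>B\<in>sets M. B \<subseteq> A \<and> 0 < emeasure M B \<and> emeasure M B < emeasure M A))"

definition orlicz_heart :: "(real \<Rightarrow> ereal) \<Rightarrow> 'a measure \<Rightarrow> ('a \<Rightarrow> real) \<Rightarrow> bool" where
  "orlicz_heart \<Phi> M X \<longleftrightarrow> X \<in> borel_measurable M \<and>
      (\<forall>c>0. integrable M (\<lambda>\<omega>. young_conj \<Phi> (c * \<bar>X \<omega>\<bar>)))"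

definition varphi :: "(real \<Rightarrow> ereal) \<Rightarrow> (real \<Rightarrow> real) \<Rightarrow> real \<Rightarrow> real" where
  "varphi \<Phi> F x = (LINT u:{0<..<1}|lborel. young_conj \<Phi> (quantile F u + x)) - x"

end

theory Submission
  imports Defs
begin


lemma yc_bdd:
  assumes Y: "Young_fun \<Phi>"
  shows "\<exists>c. \<forall>x\<ge>0. ereal (x * y) - \<Phi> x \<le> ereal c"
proof -
  have pos: "\<And>x. x \<ge> 0 \<Longrightarrow> \<Phi> x \<ge> 0" using Y by (auto simp: Young_fun_def)
  have lim: "((\<lambda>x. \<Phi> x / ereal x) \<longlongrightarrow> \<infinity>) at_top" using Y by (auto simp: Young_fun_def)
  have "ereal (\<bar>y\<bar> + 1) < \<infinity>" by simp
  from order_tendstoD(1)[OF lim this] obtain N where N: "\<And>x. x \<ge> N \<Longrightarrow> ereal (\<bar>y\<bar> + 1) < \<Phi> x / ereal x"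
    by (auto simp: eventually_at_top_linorder)
  define N' where "N' = max N 1"
  show ?thesis
  proof (intro exI allI impI)
    fix x :: real assume x: "x \<ge> 0"
    show "ereal (x * y) - \<Phi> x \<le> ereal (N' * \<bar>y\<bar>)"
    proof (cases "\<Phi> x")
      case (real p)
      have p: "p \<ge> 0" using pos[OF x] real by simp
      show ?thesis
      proof (cases "x \<ge> N'")
        case True
        then have xp: "x > 0" "x \<ge> N" by (auto simp: N'_def)
        have "ereal (\<bar>y\<bar> + 1) < ereal (p / x)" using N[OF xp(2)] real xp by simp
        then have "(\<bar>y\<bar> + 1) * x < p" using xp by (simp add: field_simps)
        moreover have "x * y \<le> \<bar>y\<bar> * x" by (metis abs_ge_self mult.commute mult_right_mono x)
        moreover have "(\<bar>y\<bar> + 1) * x = \<bar>y\<bar> * x + x" by (simp add: distrib_right)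
        moreover have "0 \<le> N' * \<bar>y\<bar>" by (simp add: N'_def)
        ultimately have "x * y - p \<le> N' * \<bar>y\<bar>" using xp(1) by argo
        then show ?thesis using real by simp
      next
        case False
        have "x * y \<le> x * \<bar>y\<bar>" using x by (simp add: mult_left_mono)
        also have "\<dots> \<le> N' * \<bar>y\<bar>" using False x by (intro mult_right_mono) auto
        finally have "x * y \<le> N' * \<bar>y\<bar>" .
        then show ?thesis using real p by simp
      qed
    next
      case PInf then show ?thesis by simp
    next
      case MInf then show ?thesis using pos[OF x] by simp
    qed
  qed
qed

lemma Young_fun_0: "Young_fun \<Phi> \<Longrightarrow> \<exists>p0\<ge>0. \<Phi> 0 = ereal p0"
  unfolding Young_fun_def by (cases "\<Phi> 0") auto

lemma Young_fun_x0: "Young_fun \<Phi> \<Longrightarrow> \<exists>x0 p1. x0 > 1 \<and> \<Phi> x0 = ereal p1"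
proof -
  assume Y: "Young_fun \<Phi>"
  then obtain x0 where "x0 > 1" "\<Phi> x0 < \<infinity>" by (auto simp: Young_fun_def)
  moreover have "\<Phi> x0 \<ge> 0" using Y \<open>x0 > 1\<close> by (auto simp: Young_fun_def)
  ultimately show ?thesis by (cases "\<Phi> x0") auto
qed

lemma yc_ereal:
  assumes Y: "Young_fun \<Phi>"
  shows "ereal (young_conj \<Phi> y) = (SUP x\<in>{0..}. ereal (x * y) - \<Phi> x)"
proof -
  obtain c where c: "\<forall>x\<ge>0. ereal (x * y) - \<Phi> x \<le> ereal c" using yc_bdd[OF Y] by blast
  obtain p0 where p0: "\<Phi> 0 = ereal p0" using Young_fun_0[OF Y] by blast
  have "(SUP x\<in>{0..}. ereal (x * y) - \<Phi> x) \<le> ereal c" using c by (auto intro!: SUP_least)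
  moreover have "ereal (0 * y) - \<Phi> 0 \<le> (SUP x\<in>{0..}. ereal (x * y) - \<Phi> x)"
    by (rule SUP_upper) auto
  ultimately have "\<bar>(SUP x\<in>{0..}. ereal (x * y) - \<Phi> x)\<bar> \<noteq> \<infinity>" using p0 by auto
  then show ?thesis unfolding young_conj_def by (rule ereal_real')
qed

lemma yc_ge:
  assumes Y: "Young_fun \<Phi>" and x: "x \<ge> 0" and p: "\<Phi> x = ereal p"
  shows "x * y - p \<le> young_conj \<Phi> y"
proof -
  have "ereal (x * y) - \<Phi> x \<le> (SUP x\<in>{0..}. ereal (x * y) - \<Phi> x)"
    by (rule SUP_upper) (use x in auto)
  then have "ereal (x * y - p) \<le> ereal (young_conj \<Phi> y)" using p yc_ereal[OF Y] by simp
  then show ?thesis by simp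
qed

lemma yc_le:
  assumes Y: "Young_fun \<Phi>" and c: "\<And>x p. x \<ge> 0 \<Longrightarrow> \<Phi> x = ereal p \<Longrightarrow> x * y - p \<le> c"
  shows "young_conj \<Phi> y \<le> c"
proof -
  have pos: "\<And>x. x \<ge> 0 \<Longrightarrow> \<Phi> x \<ge> 0" using Y by (auto simp: Young_fun_def)
  have "(SUP x\<in>{0..}. ereal (x * y) - \<Phi> x) \<le> ereal c"
  proof (rule SUP_least)
    fix x :: real assume "x \<in> {0..}"
    then have x: "x \<ge> 0" by simp
    show "ereal (x * y) - \<Phi> x \<le> ereal c"
      using c[OF x] pos[OF x] by (cases "\<Phi> x") auto
  qed
  then show ?thesis using yc_ereal[OF Y, of y] by (metis ereal_less_eq(3))
qed

lemma yc_mono: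
  assumes Y: "Young_fun \<Phi>" and "y \<le> y'"
  shows "young_conj \<Phi> y \<le> young_conj \<Phi> y'"
proof (rule yc_le[OF Y])
  fix x p assume x: "x \<ge> 0" and p: "\<Phi> x = ereal p"
  have "x * y \<le> x * y'" using x assms(2) by (simp add: mult_left_mono)
  then show "x * y - p \<le> young_conj \<Phi> y'" using yc_ge[OF Y x p, of y'] by simp
qed

lemma yc_convex:
  assumes Y: "Young_fun \<Phi>"
  shows "convex_on UNIV (young_conj \<Phi>)"
proof (rule convex_onI)
  fix t a b :: real assume t: "0 < t" "t < 1"
  show "young_conj \<Phi> ((1 - t) *\<^sub>R a + t *\<^sub>R b) \<le> (1 - t) * young_conj \<Phi> a + t * young_conj \<Phi> b"
  proof (rule yc_le[OF Y])
    fix x p assume x: "x \<ge> 0" and p: "\<Phi> x = ereal p"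
    have "x * ((1 - t) *\<^sub>R a + t *\<^sub>R b) - p = (1 - t) * (x * a - p) + t * (x * b - p)"
      by (simp add: algebra_simps)
    also have "\<dots> \<le> (1 - t) * young_conj \<Phi> a + t * young_conj \<Phi> b"
      using yc_ge[OF Y x p, of a] yc_ge[OF Y x p, of b] t
      by (intro add_mono mult_left_mono) auto
    finally show "x * ((1 - t) *\<^sub>R a + t *\<^sub>R b) - p \<le> (1 - t) * young_conj \<Phi> a + t * young_conj \<Phi> b" .
  qed
qed simp

lemma yc_cont: "Young_fun \<Phi> \<Longrightarrow> continuous_on UNIV (young_conj \<Phi>)"
  by (rule convex_on_continuous) (auto intro: yc_convex)

lemma yc_borel[measurable]: "Young_fun \<Phi> \<Longrightarrow> young_conj \<Phi> \<in> borel_measurable borel"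
  by (rule borel_measurable_continuous_onI[OF yc_cont])



lemma quantile_galois:
  assumes D: "real_distribution D" and u: "0 < u" "u < 1"
  shows "quantile (cdf D) u \<le> x \<longleftrightarrow> u \<le> cdf D x"
proof -
  interpret real_distribution D by fact
  define S where "S = {x. u \<le> cdf D x}"
  have "\<forall>\<^sub>F x in at_top. u < cdf D x"
    using order_tendstoD(1)[OF cdf_lim_at_top_prob u(2)] .
  then obtain x1 where "u < cdf D x1" by (auto simp: eventually_at_top_linorder)
  then have ne: "S \<noteq> {}" unfolding S_def by (auto intro: less_imp_le)
  have "\<forall>\<^sub>F x in at_bot. cdf D x < u"
    using order_tendstoD(2)[OF cdf_lim_at_bot u(1)] .
  then obtain L where L: "\<And>x. x \<le> L \<Longrightarrow> cdf D x < u" by (auto simp: eventually_at_bot_linorder)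
  have bdd: "bdd_below S"
  proof (rule bdd_belowI)
    fix s assume "s \<in> S"
    then have "u \<le> cdf D s" by (simp add: S_def)
    then show "L \<le> s" using L by (metis linorder_not_le order_less_imp_le not_le)
  qed
  have q: "quantile (cdf D) u = Inf S" by (simp add: quantile_def S_def)
  have inS: "u \<le> cdf D (Inf S)"
  proof (rule tendsto_lowerbound)
    show "(cdf D \<longlongrightarrow> cdf D (Inf S)) (at_right (Inf S))"
      using cdf_is_right_cont[of "Inf S"] by (simp add: continuous_within)
    show "\<forall>\<^sub>F t in at_right (Inf S). u \<le> cdf D t"
      using eventually_at_right_less[of "Inf S"]
    proof (rule eventually_mono)
      fix t assume "Inf S < t"
      then obtain s where s: "s \<in> S" "s < t" using cInf_less_iff[OF ne bdd] by auto
      then show "u \<le> cdf D t" using cdf_nondecreasing[of s t] by (simp add: S_def)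
    qed
  qed simp
  show ?thesis
  proof
    assume "quantile (cdf D) u \<le> x"
    then show "u \<le> cdf D x" using inS cdf_nondecreasing[of "Inf S" x] q by simp
  next
    assume "u \<le> cdf D x"
    then show "quantile (cdf D) u \<le> x" unfolding q by (intro cInf_lower[OF _ bdd]) (simp add: S_def)
  qed
qed

locale setting =
  fixes \<Phi> :: "real \<Rightarrow> ereal" and M :: "'a measure" and X :: "'a \<Rightarrow> real"
  assumes Y: "Young_fun \<Phi>" and P: "prob_space M" and H: "orlicz_heart \<Phi> M X"
begin

abbreviation "g \<equiv> young_conj \<Phi>"
abbreviation "D \<equiv> distr M borel X"
abbreviation "q \<equiv> quantile (cdf D)"
abbreviation "N \<equiv> restrict_space lborel {0<..<1::real}"

lemma X_meas[measurable]: "X \<in> borel_measurable M"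
  using H by (simp add: orlicz_heart_def)

lemma D_real: "real_distribution D"
  using P by (intro prob_space.real_distribution_distr) auto

lemma galois: "u \<in> {0<..<1} \<Longrightarrow> q u \<le> x \<longleftrightarrow> u \<le> cdf D x"
  using quantile_galois[OF D_real] by auto

lemma space_N[simp]: "space N = {0<..<1}"
  by (simp add: space_restrict_space)

lemma q_mono: "mono_on {0<..<1} q"
proof (rule mono_onI)
  fix u v :: real assume uv: "u \<in> {0<..<1}" "v \<in> {0<..<1}" "u \<le> v"
  have "v \<le> cdf D (q v)" using galois[OF uv(2), of "q v"] by simp
  then show "q u \<le> q v" using galois[OF uv(1)] uv(3) by simp
qed

lemma q_meas[measurable]: "q \<in> borel_measurable N"
proof -
  have "q \<in> borel_measurable (restrict_space borel {0<..<1})"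
    by (rule borel_measurable_mono_on_fnc[OF q_mono])
  then show ?thesis
    by (subst measurable_cong_sets[OF sets_restrict_space_cong[OF sets_lborel] refl])
qed

lemma N_prob: "prob_space N"
proof
  show "emeasure N (space N) = 1"
    by (simp add: emeasure_restrict_space)
qed

lemma distr_q: "distr N borel q = D"
proof (rule cdf_unique)
  show "real_distribution (distr N borel q)"
    using N_prob by (intro prob_space.real_distribution_distr) auto
  show "real_distribution D" by (rule D_real)
  show "cdf (distr N borel q) = cdf D"
  proof
    fix x
    have c0: "0 \<le> cdf D x" "cdf D x \<le> 1"
      using finite_borel_measure.cdf_nonneg[OF real_distribution.finite_borel_measure_M[OF D_real]]
        real_distribution.cdf_bounded_prob[OF D_real] by auto
    have "cdf (distr N borel q) x = measure (distr N borel q) {..x}"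
      by (simp only: cdf_def)
    also have "\<dots> = measure N (q -` {..x} \<inter> space N)"
      by (rule measure_distr[OF q_meas]) simp
    also have "q -` {..x} \<inter> space N = {0<..<1} \<inter> {..cdf D x}"
      using galois by auto
    also have "measure N ({0<..<1} \<inter> {..cdf D x}) = measure lborel ({0<..<1} \<inter> {..cdf D x})"
      by (rule measure_restrict_space) auto
    also have "\<dots> = cdf D x"
    proof (cases "cdf D x < 1")
      case True
      then have "{0<..<1} \<inter> {..cdf D x} = {0<..cdf D x}" by auto
      then show ?thesis using c0 by simp
    next
      case False
      then have "{0<..<1} \<inter> {..cdf D x} = {0<..<1::real}" using c0 by auto
      then show ?thesis using c0 False by simp
    qed
    finally show "cdf (distr N borel q) x = cdf D x" .
  qed
qed

lemma transfer:
  fixes h :: "real \<Rightarrow> real"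
  assumes [measurable]: "h \<in> borel_measurable borel" and "integrable M (\<lambda>\<omega>. h (X \<omega>))"
  shows "integrable N (\<lambda>u. h (q u))"
proof -
  have "integrable D h" using integrable_distr_eq[OF X_meas assms(1)] assms(2) by simp
  then have "integrable (distr N borel q) h" using distr_q by simp
  then show ?thesis by (subst (asm) integrable_distr_eq) auto
qed

lemma int_gq: "c > 0 \<Longrightarrow> integrable N (\<lambda>u. g (c * \<bar>q u\<bar>))"
  using H Y by (intro transfer) (auto simp: orlicz_heart_def)

end


context setting begin

lemma g_meas[measurable]: "g \<in> borel_measurable borel"
  using yc_borel[OF Y] .

lemma g_conv: "convex_on UNIV g" using yc_convex[OF Y] .

lemma g_mono: "y \<le> y' \<Longrightarrow> g y \<le> g y'" using yc_mono[OF Y] .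

lemma g_lower0: "\<exists>p0\<ge>0. \<forall>y. - p0 \<le> g y"
proof -
  obtain p0 where p0: "p0 \<ge> 0" "\<Phi> 0 = ereal p0" using Young_fun_0[OF Y] by blast
  show ?thesis using yc_ge[OF Y _ p0(2)] p0(1) by auto
qed

lemma g_lower1: "\<exists>x0>1. \<exists>p1. \<forall>y. x0 * y - p1 \<le> g y"
proof -
  obtain x0 p1 where x: "x0 > 1" "\<Phi> x0 = ereal p1" using Young_fun_x0[OF Y] by blast
  show ?thesis using yc_ge[OF Y _ x(2)] x(1) by auto
qed

lemma g_half: "g ((a + b) / 2) \<le> (g a + g b) / 2"
proof -
  have "g ((1 - 1/2) *\<^sub>R a + (1/2) *\<^sub>R b) \<le> (1 - 1/2) * g a + (1/2) * g b"
    by (rule convex_onD[OF g_conv]) auto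
  moreover have "(1 - 1/2) *\<^sub>R a + (1/2) *\<^sub>R b = (a + b) / 2" by simp
  ultimately have "g ((a + b) / 2) \<le> (1 - 1/2) * g a + (1/2) * g b" by metis
  then show ?thesis by (simp add: field_simps)
qed

lemma N_fin: "finite_measure N" using N_prob by (simp add: prob_space_def)

lemma N_int_const[simp]: "integrable N (\<lambda>x. c :: real)"
  using finite_measure.integrable_const[OF N_fin] .

lemma N_space_meas[simp]: "measure N {0<..<1} = 1"
  by (subst measure_restrict_space) auto

lemma N_integral_const[simp]: "integral\<^sup>L N (\<lambda>x. c :: real) = c"
  by simp

lemma int_q: "integrable N q"
proof -
  obtain x0 p1 where x0: "x0 > 1" and l: "\<And>y. x0 * y - p1 \<le> g y" using g_lower1 by blast
  show ?thesis
  proof (rule Bochner_Integration.integrable_bound[where f="\<lambda>u. g (1 * \<bar>q u\<bar>) + p1"])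
    show "integrable N (\<lambda>u. g (1 * \<bar>q u\<bar>) + p1)"
      using int_gq[of 1] by simp
    show "q \<in> borel_measurable N" by measurable
    show "AE u in N. norm (q u) \<le> norm (g (1 * \<bar>q u\<bar>) + p1)"
    proof (intro AE_I2)
      fix u
      have "\<bar>q u\<bar> \<le> x0 * \<bar>q u\<bar>" using x0 by (simp add: mult_le_cancel_right1)
      also have "\<dots> \<le> g (1 * \<bar>q u\<bar>) + p1" using l[of "\<bar>q u\<bar>"] by simp
      finally show "norm (q u) \<le> norm (g (1 * \<bar>q u\<bar>) + p1)" by simp
    qed
  qed
qed

lemma int_g: "integrable N (\<lambda>u. g (q u + z))"
proof -
  obtain p0 where p0: "p0 \<ge> 0" "\<And>y. - p0 \<le> g y" using g_lower0 by blast
  show ?thesis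
  proof (rule Bochner_Integration.integrable_bound[where f="\<lambda>u. p0 + \<bar>g (2 * \<bar>q u\<bar>)\<bar> + \<bar>g (2 * \<bar>z\<bar>)\<bar>"])
    show "integrable N (\<lambda>u. p0 + \<bar>g (2 * \<bar>q u\<bar>)\<bar> + \<bar>g (2 * \<bar>z\<bar>)\<bar>)"
    proof -
      have "integrable N (\<lambda>u. \<bar>g (2 * \<bar>q u\<bar>)\<bar>)"
        using int_gq[of 2] by (intro Bochner_Integration.integrable_abs) auto
      from Bochner_Integration.integrable_add[OF Bochner_Integration.integrable_add[OF N_int_const this] N_int_const]
      show ?thesis .
    qed
    show "(\<lambda>u. g (q u + z)) \<in> borel_measurable N" by measurable
    show "AE u in N. norm (g (q u + z)) \<le> norm (p0 + \<bar>g (2 * \<bar>q u\<bar>)\<bar> + \<bar>g (2 * \<bar>z\<bar>)\<bar>)"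
    proof (intro AE_I2)
      fix u
      have "g (q u + z) \<le> g ((2 * \<bar>q u\<bar> + 2 * \<bar>z\<bar>) / 2)" by (intro g_mono) auto
      also have "\<dots> \<le> (g (2 * \<bar>q u\<bar>) + g (2 * \<bar>z\<bar>)) / 2" by (rule g_half)
      finally have "g (q u + z) \<le> (g (2 * \<bar>q u\<bar>) + g (2 * \<bar>z\<bar>)) / 2" .
      then show "norm (g (q u + z)) \<le> norm (p0 + \<bar>g (2 * \<bar>q u\<bar>)\<bar> + \<bar>g (2 * \<bar>z\<bar>)\<bar>)"
        using p0(1) p0(2)[of "q u + z"] by auto
    qed
  qed
qed

definition I :: "real \<Rightarrow> real" where "I z = integral\<^sup>L N (\<lambda>u. g (q u + z))"

lemma LINT_N: fixes f :: "real \<Rightarrow> real" shows "set_lebesgue_integral lborel {0<..<1::real} f = integral\<^sup>L N f"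
  unfolding set_lebesgue_integral_def by (rule integral_restrict_space[symmetric]) auto

lemma varphi_eq: "varphi \<Phi> (cdf D) z = I z - z"
  unfolding varphi_def I_def LINT_N ..

lemma I_convex: "convex_on UNIV I"
proof (rule convex_onI)
  fix t a b :: real assume t: "0 < t" "t < 1"
  have "I ((1 - t) *\<^sub>R a + t *\<^sub>R b) = integral\<^sup>L N (\<lambda>u. g ((1 - t) *\<^sub>R (q u + a) + t *\<^sub>R (q u + b)))"
    unfolding I_def by (rule Bochner_Integration.integral_cong) (auto simp: algebra_simps)
  also have "\<dots> \<le> integral\<^sup>L N (\<lambda>u. (1 - t) * g (q u + a) + t * g (q u + b))"
    using t int_g[of a] int_g[of b] int_g[of "(1 - t) *\<^sub>R a + t *\<^sub>R b"]
    by (intro integral_mono integrable_add integrable_mult_right convex_onD[OF g_conv]) (auto simp: algebra_simps)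
  also have "\<dots> = (1 - t) * I a + t * I b"
    unfolding I_def using int_g[of a] int_g[of b] by simp
  finally show "I ((1 - t) *\<^sub>R a + t *\<^sub>R b) \<le> (1 - t) * I a + t * I b" .
qed simp

end


lemma slope_eq: "h \<noteq> 0 \<Longrightarrow> (a - b) / (y - (y + h)) = (b - a) / (h::real)"
  by (simp add: field_simps)

lemma slope_mono:
  fixes f :: "real \<Rightarrow> real"
  assumes f: "convex_on UNIV f" and h: "h1 \<le> h2" "h1 \<noteq> 0" "h2 \<noteq> 0"
  shows "(f (y + h1) - f y) / h1 \<le> (f (y + h2) - f y) / h2"
proof (cases "h1 = h2")
  case True then show ?thesis by simp
next
  case False
  with h have lt: "h1 < h2" by simp
  consider "0 < h1" | "h2 < 0" | "h1 < 0" "0 < h2" using h lt by linarith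
  then show ?thesis
  proof cases
    case 1
    have "(f y - f (y + h1)) / (y - (y + h1)) \<le> (f y - f (y + h2)) / (y - (y + h2))"
      using convex_on_slope_le(1)[OF f, of y "y + h2" "y + h1"] 1 lt by simp
    then show ?thesis using slope_eq[of h1 "f y" "f (y + h1)" y] slope_eq[of h2 "f y" "f (y + h2)" y] h by simp
  next
    case 2
    have "(f (y + h1) - f y) / ((y + h1) - y) \<le> (f (y + h2) - f y) / ((y + h2) - y)"
      using convex_on_slope_le(2)[OF f, of "y + h1" y "y + h2"] 2 lt by simp
    then show ?thesis by (simp only: add_diff_cancel_left')
  next
    case 3
    have a: "(f (y + h1) - f y) / ((y + h1) - y) \<le> (f (y + h1) - f (y + h2)) / ((y + h1) - (y + h2))"
      using convex_on_slope_le(1)[OF f, of "y + h1" "y + h2" y] 3 by (simp only: add_diff_cancel_left' add.right_neutral) simp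
    have b: "(f (y + h1) - f (y + h2)) / ((y + h1) - (y + h2)) \<le> (f y - f (y + h2)) / (y - (y + h2))"
      using convex_on_slope_le(2)[OF f, of "y + h1" "y + h2" y] 3 by simp
    have c: "(f y - f (y + h2)) / (y - (y + h2)) = (f (y + h2) - f y) / h2"
      using slope_eq[of h2 "f y" "f (y + h2)" y] h by simp
    have d: "(f (y + h1) - f y) / ((y + h1) - y) = (f (y + h1) - f y) / h1" by simp
    show ?thesis using a b c d by linarith
  qed
qed

lemma rderiv_tendsto:
  fixes f :: "real \<Rightarrow> real"
  assumes f: "convex_on UNIV f"
  shows "((\<lambda>h. (f (y + h) - f y) / h) \<longlongrightarrow> rderiv f y) (at_right 0)"
proof -
  let ?Q = "\<lambda>h. (f (y + h) - f y) / h"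
  have "(?Q \<longlongrightarrow> Inf (?Q ` ({0<..} \<inter> UNIV))) (at 0 within ({0<..} \<inter> UNIV))"
    apply (rule Lim_right_bound[where K="?Q (-1)"])
     apply (auto intro!: slope_mono[OF f])[1]
    subgoal for a using slope_mono[OF f, of "-1" a y] by simp
    done
  then have *: "(?Q \<longlongrightarrow> Inf (?Q ` {0<..})) (at_right 0)" by simp
  then have "rderiv f y = Inf (?Q ` {0<..})"
    unfolding rderiv_def by (intro tendsto_Lim) auto
  then show ?thesis using * by simp
qed

lemma lderiv_tendsto:
  fixes f :: "real \<Rightarrow> real"
  assumes f: "convex_on UNIV f"
  shows "((\<lambda>h. (f (y + h) - f y) / h) \<longlongrightarrow> lderiv f y) (at_left 0)"
proof -
  let ?Q = "\<lambda>h. (f (y + h) - f y) / h"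
  have "(?Q \<longlongrightarrow> Sup (?Q ` ({..<0} \<inter> UNIV))) (at 0 within ({..<0} \<inter> UNIV))"
    apply (rule Lim_left_bound[where K="?Q 1"])
     apply (auto intro!: slope_mono[OF f])[1]
    subgoal for b using slope_mono[OF f, of b 1 y] by simp
    done
  then have *: "(?Q \<longlongrightarrow> Sup (?Q ` {..<0})) (at_left 0)" by simp
  then have "lderiv f y = Sup (?Q ` {..<0})"
    unfolding lderiv_def by (intro tendsto_Lim) auto
  then show ?thesis using * by simp
qed

lemma slope_bound:
  fixes f :: "real \<Rightarrow> real"
  assumes f: "convex_on UNIV f" and h: "h \<noteq> 0" "\<bar>h\<bar> \<le> 1"
  shows "\<bar>(f (y + h) - f y) / h\<bar> \<le> \<bar>f (y + 1) - f y\<bar> + \<bar>f y - f (y - 1)\<bar>"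
proof -
  have a: "(f (y + h) - f y) / h \<le> f (y + 1) - f y"
    using slope_mono[OF f, of h 1 y] h by simp
  have "(f (y + (-1)) - f y) / (-1) \<le> (f (y + h) - f y) / h"
    using slope_mono[OF f, of "-1" h y] h by simp
  moreover have "(f (y + (-1)) - f y) / (-1) = f y - f (y - 1)" by simp
  ultimately have b: "f y - f (y - 1) \<le> (f (y + h) - f y) / h" by simp
  show ?thesis unfolding abs_le_iff
    using a b abs_ge_self[of "f (y + 1) - f y"] abs_ge_minus_self[of "f y - f (y - 1)"]
      abs_ge_zero[of "f (y + 1) - f y"] abs_ge_zero[of "f y - f (y - 1)"]
    by linarith
qed



context setting begin

lemma I_quot: "integral\<^sup>L N (\<lambda>u. (g (q u + x + h) - g (q u + x)) / h) = (I (x + h) - I x) / h"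
proof -
  have "integral\<^sup>L N (\<lambda>u. (g (q u + x + h) - g (q u + x)) / h)
      = integral\<^sup>L N (\<lambda>u. g (q u + (x + h)) - g (q u + x)) / h"
    by (simp add: add.assoc)
  also have "\<dots> = (I (x + h) - I x) / h"
    unfolding I_def using int_g[of "x + h"] int_g[of x] by simp
  finally show ?thesis .
qed

lemma dc_general:
  fixes c x :: real and R :: "real \<Rightarrow> real"
  assumes c: "\<bar>c\<bar> = 1"
    and lim: "\<And>u. ((\<lambda>t. (g (q u + x + c * inverse t) - g (q u + x)) / (c * inverse t)) \<longlongrightarrow> R u) at_top"
  shows "((\<lambda>t. (I (x + c * inverse t) - I x) / (c * inverse t)) \<longlongrightarrow> integral\<^sup>L N R) at_top"
proof -
  let ?s = "\<lambda>t u. (g (q u + x + c * inverse t) - g (q u + x)) / (c * inverse t)"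
  let ?w = "\<lambda>u. \<bar>g (q u + x + 1) - g (q u + x)\<bar> + \<bar>g (q u + x) - g (q u + x - 1)\<bar>"
  have Rm: "R \<in> borel_measurable N"
  proof (rule borel_measurable_LIMSEQ_real[where u="\<lambda>n. ?s (real n)"])
    fix u show "(\<lambda>n. ?s (real n) u) \<longlonglongrightarrow> R u"
      by (rule filterlim_compose[OF lim filterlim_real_sequentially])
  next
    fix n :: nat show "?s (real n) \<in> borel_measurable N" by measurable
  qed
  have sm: "\<And>t. ?s t \<in> borel_measurable N" by measurable
  have wi: "integrable N ?w"
  proof -
    have e1: "(\<lambda>u. g (q u + x + 1) - g (q u + x)) = (\<lambda>u. g (q u + (x + 1)) - g (q u + x))"
      by (simp add: add.assoc)
    have e2: "(\<lambda>u. g (q u + x) - g (q u + x - 1)) = (\<lambda>u. g (q u + x) - g (q u + (x - 1)))"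
      by (simp add: algebra_simps)
    have i1: "integrable N (\<lambda>u. g (q u + x + 1) - g (q u + x))"
      unfolding e1 by (intro Bochner_Integration.integrable_diff int_g)
    have i2: "integrable N (\<lambda>u. g (q u + x) - g (q u + x - 1))"
      unfolding e2 by (intro Bochner_Integration.integrable_diff int_g)
    show ?thesis
      by (intro Bochner_Integration.integrable_add Bochner_Integration.integrable_abs i1 i2)
  qed
  have bound: "\<forall>\<^sub>F t in at_top. AE u in N. norm (?s t u) \<le> ?w u"
    using eventually_ge_at_top[of 1]
  proof (rule eventually_mono)
    fix t :: real assume t: "1 \<le> t"
    have h: "c * inverse t \<noteq> 0" "\<bar>c * inverse t\<bar> \<le> 1"
      using t c by (auto simp: abs_mult field_simps)
    show "AE u in N. norm (?s t u) \<le> ?w u"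
      using slope_bound[OF g_conv h] by auto
  qed
  have "((\<lambda>t. integral\<^sup>L N (?s t)) \<longlongrightarrow> integral\<^sup>L N R) at_top"
    by (rule integral_dominated_convergence_at_top[OF Rm sm wi _ bound]) (use lim in auto)
  then show ?thesis by (simp only: I_quot)
qed

lemma I_rderiv: "((\<lambda>h. (I (x + h) - I x) / h) \<longlongrightarrow> integral\<^sup>L N (\<lambda>u. rderiv g (q u + x))) (at_right 0)"
proof -
  have "((\<lambda>t. (I (x + 1 * inverse t) - I x) / (1 * inverse t)) \<longlongrightarrow> integral\<^sup>L N (\<lambda>u. rderiv g (q u + x))) at_top"
  proof (rule dc_general)
    fix u
    have "((\<lambda>h. (g (q u + x + h) - g (q u + x)) / h) \<longlongrightarrow> rderiv g (q u + x)) (at_right 0)"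
      by (rule rderiv_tendsto[OF g_conv])
    then show "((\<lambda>t. (g (q u + x + 1 * inverse t) - g (q u + x)) / (1 * inverse t)) \<longlongrightarrow> rderiv g (q u + x)) at_top"
      by (simp add: filterlim_at_right_to_top)
  qed simp
  then show ?thesis by (simp add: filterlim_at_right_to_top)
qed

lemma I_lderiv: "((\<lambda>h. (I (x + h) - I x) / h) \<longlongrightarrow> integral\<^sup>L N (\<lambda>u. lderiv g (q u + x))) (at_left 0)"
proof -
  have "((\<lambda>t. (I (x + (-1) * inverse t) - I x) / ((-1) * inverse t)) \<longlongrightarrow> integral\<^sup>L N (\<lambda>u. lderiv g (q u + x))) at_top"
  proof (rule dc_general)
    fix u
    have "((\<lambda>h. (g (q u + x + h) - g (q u + x)) / h) \<longlongrightarrow> lderiv g (q u + x)) (at_left 0)"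
      by (rule lderiv_tendsto[OF g_conv])
    then have "((\<lambda>h. (g (q u + x + - h) - g (q u + x)) / - h) \<longlongrightarrow> lderiv g (q u + x)) (at_right 0)"
      by (simp add: filterlim_at_left_to_right[where a=0])
    then show "((\<lambda>t. (g (q u + x + (-1) * inverse t) - g (q u + x)) / ((-1) * inverse t)) \<longlongrightarrow> lderiv g (q u + x)) at_top"
      by (simp add: filterlim_at_right_to_top)
  qed simp
  then have "((\<lambda>h. (I (x + - h) - I x) / - h) \<longlongrightarrow> integral\<^sup>L N (\<lambda>u. lderiv g (q u + x))) (at_right 0)"
    by (simp add: filterlim_at_right_to_top)
  then show ?thesis by (simp add: filterlim_at_left_to_right[where a=0])
qed

end


context setting begin

abbreviation "phi \<equiv> varphi \<Phi> (cdf D)"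

lemma phi_convex: "convex_on UNIV phi"
proof (rule convex_onI)
  fix t a b :: real assume t: "0 < t" "t < 1"
  have "I ((1 - t) *\<^sub>R a + t *\<^sub>R b) \<le> (1 - t) * I a + t * I b"
    using convex_onD[OF I_convex, of t a b] t by simp
  then show "phi ((1 - t) *\<^sub>R a + t *\<^sub>R b) \<le> (1 - t) * phi a + t * phi b"
    unfolding varphi_eq by (simp add: algebra_simps)
qed simp

lemma phi_cont: "continuous_on UNIV phi"
  by (rule convex_on_continuous[OF open_UNIV phi_convex])

lemma phi_coercive: "\<exists>R>0. \<forall>x. R \<le> \<bar>x\<bar> \<longrightarrow> phi 0 < phi x"
proof -
  obtain p0 where p0: "p0 \<ge> 0" "\<And>y. - p0 \<le> g y" using g_lower0 by blast
  obtain x0 p1 where x0: "x0 > 1" and l: "\<And>y. x0 * y - p1 \<le> g y" using g_lower1 by blast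
  define E where "E = integral\<^sup>L N q"
  define m0 where "m0 = phi 0"
  define K where "K = (m0 + p1 - x0 * E) / (x0 - 1)"
  define R where "R = \<bar>p0\<bar> + \<bar>m0\<bar> + \<bar>K\<bar> + 1"
  have low0: "- p0 \<le> I z" for z
  proof -
    have "integral\<^sup>L N (\<lambda>u. - p0) \<le> I z"
      unfolding I_def by (intro integral_mono int_g p0(2)) simp
    then show ?thesis by simp
  qed
  have low1: "x0 * E + x0 * z - p1 \<le> I z" for z
  proof -
    have "integral\<^sup>L N (\<lambda>u. x0 * (q u + z) - p1) \<le> I z"
      unfolding I_def using int_q by (intro integral_mono int_g l) auto
    moreover have "integral\<^sup>L N (\<lambda>u. x0 * (q u + z) - p1) = x0 * E + x0 * z - p1"
    proof -
      have "integral\<^sup>L N (\<lambda>u. x0 * (q u + z) - p1) = integral\<^sup>L N (\<lambda>u. x0 * q u + (x0 * z - p1))"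
        by (simp add: algebra_simps)
      also have "\<dots> = x0 * E + (x0 * z - p1)"
        using int_q by (subst Bochner_Integration.integral_add) (auto simp: E_def)
      finally show ?thesis by simp
    qed
    ultimately show ?thesis by simp
  qed
  show ?thesis
  proof (intro exI[of _ R] conjI allI impI)
    show "R > 0" unfolding R_def by simp
    fix x assume x: "R \<le> \<bar>x\<bar>"
    show "phi 0 < phi x"
    proof (cases "x \<ge> 0")
      case True
      then have "x > K" using x unfolding R_def by linarith
      then have "(x0 - 1) * K < (x0 - 1) * x" using x0 by (intro mult_strict_left_mono) auto
      moreover have "(x0 - 1) * K = m0 + p1 - x0 * E" unfolding K_def using x0 by simp
      ultimately have "m0 < x0 * E + x0 * x - p1 - x" by (simp add: algebra_simps)
      then show ?thesis using low1[of x] unfolding varphi_eq m0_def by linarith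
    next
      case False
      then have "- x \<ge> R" using x by linarith
      then have "m0 < - p0 - x" unfolding R_def by linarith
      then show ?thesis using low0[of x] unfolding varphi_eq m0_def by linarith
    qed
  qed
qed

lemma phi_argmin: "\<exists>a b. a \<le> b \<and> {x. \<forall>y. phi x \<le> phi y} = {a..b}"
proof -
  obtain R where R: "R > 0" "\<And>x. R \<le> \<bar>x\<bar> \<Longrightarrow> phi 0 < phi x" using phi_coercive by blast
  obtain xm where xm: "xm \<in> {-R..R}" "\<And>y. y \<in> {-R..R} \<Longrightarrow> phi xm \<le> phi y"
    using continuous_attains_inf[of "{-R..R}" phi] continuous_on_subset[OF phi_cont] R(1) by auto
  define S where "S = {x. \<forall>y. phi x \<le> phi y}"
  have xmS0: "\<forall>y. phi xm \<le> phi y"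
  proof
    fix y show "phi xm \<le> phi y"
    proof (cases "\<bar>y\<bar> \<le> R")
      case True then show ?thesis using xm(2)[of y] by (auto simp: abs_le_iff)
    next
      case False
      then have "phi 0 < phi y" using R(2) by simp
      moreover have "phi xm \<le> phi 0" using xm(2) R(1) by simp
      ultimately show ?thesis by simp
    qed
  qed
  have xmS: "xm \<in> S" using xmS0 unfolding S_def by simp
  have S_eq: "S = {x. phi x \<le> phi xm}"
    using xmS unfolding S_def by (auto intro: order_trans)
  have closed: "closed S" unfolding S_eq
    by (rule closed_Collect_le[OF phi_cont continuous_on_const])
  have Sbd: "\<And>x. x \<in> S \<Longrightarrow> \<bar>x\<bar> < R"
  proof -
    fix x assume "x \<in> S"
    then have "phi x \<le> phi 0" unfolding S_def by simp
    then show "\<bar>x\<bar> < R" using R(2)[of x] by fastforce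
  qed
  have ne: "S \<noteq> {}" using xmS by auto
  have bb: "bdd_below S" by (rule bdd_belowI[of _ "-R"]) (use Sbd in force)
  have ba: "bdd_above S" by (rule bdd_aboveI[of _ R]) (use Sbd in force)
  have aS: "Inf S \<in> S" by (rule closed_contains_Inf[OF ne bb closed])
  have bS: "Sup S \<in> S" by (rule closed_contains_Sup[OF ne ba closed])
  have "S = {Inf S..Sup S}"
  proof
    show "S \<subseteq> {Inf S..Sup S}" using cInf_lower[OF _ bb] cSup_upper[OF _ ba] by auto
  next
    show "{Inf S..Sup S} \<subseteq> S"
    proof
      fix z assume z: "z \<in> {Inf S..Sup S}"
      show "z \<in> S"
      proof (cases "Inf S = Sup S")
        case True then show ?thesis using z aS by auto
      next
        case False
        then have lt: "Inf S < Sup S" using z by auto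
        define t where "t = (z - Inf S) / (Sup S - Inf S)"
        have t: "0 \<le> t" "t \<le> 1" using z lt by (auto simp: t_def field_simps)
        have tt: "t * (Sup S - Inf S) = z - Inf S" using lt by (simp add: t_def)
        have "(1 - t) *\<^sub>R Inf S + t *\<^sub>R Sup S = Inf S + t * (Sup S - Inf S)" by (simp add: algebra_simps)
        then have zt: "(1 - t) *\<^sub>R Inf S + t *\<^sub>R Sup S = z" using tt by simp
        have cv: "phi z \<le> (1 - t) * phi (Inf S) + t * phi (Sup S)"
          using convex_onD[OF phi_convex t, of "Inf S" "Sup S"] zt by simp
        have "\<forall>y. phi z \<le> phi y"
        proof
          fix y
          have "(1 - t) * phi (Inf S) \<le> (1 - t) * phi y" using aS t unfolding S_def by (intro mult_left_mono) auto
          moreover have "t * phi (Sup S) \<le> t * phi y" using bS t unfolding S_def by (intro mult_left_mono) auto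
          ultimately show "phi z \<le> phi y" using cv by (simp add: algebra_simps)
        qed
        then show "z \<in> S" unfolding S_def by simp
      qed
    qed
  qed
  moreover have "Inf S \<le> Sup S" using aS cSup_upper[OF _ ba] by auto
  ultimately show ?thesis unfolding S_def by blast
qed

lemma phi_quot_eq: "h \<noteq> 0 \<Longrightarrow> (phi (x + h) - phi x) / h = (I (x + h) - I x) / h - 1"
  unfolding varphi_eq by (simp add: field_simps)

lemma phi_rderiv: "((\<lambda>h. (phi (x + h) - phi x) / h) \<longlongrightarrow>
    (LINT u:{0<..<1}|lborel. rderiv g (q u + x)) - 1) (at_right 0)"
proof -
  have "((\<lambda>h. (I (x + h) - I x) / h - 1) \<longlongrightarrow> integral\<^sup>L N (\<lambda>u. rderiv g (q u + x)) - 1) (at_right 0)"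
    by (intro tendsto_diff I_rderiv tendsto_const)
  then show ?thesis unfolding LINT_N
    by (rule Lim_transform_eventually)
       (auto simp: phi_quot_eq eventually_at_filter)
qed

lemma phi_lderiv: "((\<lambda>h. (phi (x + h) - phi x) / h) \<longlongrightarrow>
    (LINT u:{0<..<1}|lborel. lderiv g (q u + x)) - 1) (at_left 0)"
proof -
  have "((\<lambda>h. (I (x + h) - I x) / h - 1) \<longlongrightarrow> integral\<^sup>L N (\<lambda>u. lderiv g (q u + x)) - 1) (at_left 0)"
    by (intro tendsto_diff I_lderiv tendsto_const)
  then show ?thesis unfolding LINT_N
    by (rule Lim_transform_eventually)
       (auto simp: phi_quot_eq eventually_at_filter)
qed

end

theorem propositionA1:
  fixes \<Phi> :: "real \<Rightarrow> ereal" and M :: "'a measure" and X :: "'a \<Rightarrow> real"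
  assumes "Young_fun \<Phi>"
    and "prob_space M" and "atomless M"
    and "orlicz_heart \<Phi> M X"
    and F_def: "F = cdf (distr M borel X)"
  shows "convex_on UNIV (varphi \<Phi> F)
    \<and> (\<exists>a b. a \<le> b \<and> {x. \<forall>y. varphi \<Phi> F x \<le> varphi \<Phi> F y} = {a..b})
    \<and> (\<forall>x. ((\<lambda>h. (varphi \<Phi> F (x + h) - varphi \<Phi> F x) / h)
              \<longlongrightarrow> (LINT u:{0<..<1}|lborel. lderiv (young_conj \<Phi>) (quantile F u + x)) - 1) (at_left 0)
          \<and> ((\<lambda>h. (varphi \<Phi> F (x + h) - varphi \<Phi> F x) / h)
              \<longlongrightarrow> (LINT u:{0<..<1}|lborel. rderiv (young_conj \<Phi>) (quantile F u + x)) - 1) (at_right 0))"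
proof -
  interpret setting \<Phi> M X by (rule setting.intro[OF assms(1,2,4)])
  show ?thesis unfolding F_def using phi_convex phi_argmin phi_lderiv phi_rderiv by blast
qed

end
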